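(* Let $\beta,\delta\in(0,1)$, $K>0$, and let $\eta_1,\eta_2\ge0$ be constants. Consider $$\frac{df}{dt}=\tfrac12 fm\beta L-\delta f-\eta_1 f,\qquad \frac{dm}{dt}=\tfrac12 fm\beta L-\delta m-\eta_2 m,\qquad L=1-\frac{f+m}{K}.$$ If $\beta K<2\delta+\eta_1+\eta_2$, then the trivial equilibrium $(0,0)$ is globally asymptotically stable.
   Context: $f,m$ are female and male densities, and $\eta_1,\eta_2$ are the female and male harvesting rates (the "female harvesting male harvesting" model). *)

theory Defs
  imports "HOL-Analysis.Analysis"
begin

definition fhmh_L :: "real \<Rightarrow> real \<Rightarrow> real \<Rightarrow> real" where
  "fhmh_L K x y = 1 - (x + y) / K"

definition fhmh_rhs_f :: "real \<Rightarrow> real \<Rightarrow> real \<Rightarrow> real \<Rightarrow> real \<Rightarrow> real \<Rightarrow> real \<Rightarrow> real" where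
  "fhmh_rhs_f \<beta> \<delta> K \<eta>1 \<eta>2 x y = (1/2) * x * y * \<beta> * fhmh_L K x y - \<delta> * x - \<eta>1 * x"

definition fhmh_rhs_m :: "real \<Rightarrow> real \<Rightarrow> real \<Rightarrow> real \<Rightarrow> real \<Rightarrow> real \<Rightarrow> real \<Rightarrow> real" where
  "fhmh_rhs_m \<beta> \<delta> K \<eta>1 \<eta>2 x y = (1/2) * x * y * \<beta> * fhmh_L K x y - \<delta> * y - \<eta>2 * y"

definition fhmh_solution ::
  "real \<Rightarrow> real \<Rightarrow> real \<Rightarrow> real \<Rightarrow> real \<Rightarrow> (real \<Rightarrow> real) \<Rightarrow> (real \<Rightarrow> real) \<Rightarrow> bool" where
  "fhmh_solution \<beta> \<delta> K \<eta>1 \<eta>2 f m \<longleftrightarrow>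
     (\<forall>t\<ge>0. (f has_real_derivative fhmh_rhs_f \<beta> \<delta> K \<eta>1 \<eta>2 (f t) (m t)) (at t within {0..})
          \<and> (m has_real_derivative fhmh_rhs_m \<beta> \<delta> K \<eta>1 \<eta>2 (f t) (m t)) (at t within {0..}))"

text \<open>Global asymptotic stability of (0,0) on the biologically relevant state space
  (the closed nonnegative quadrant): Lyapunov stability plus global attractivity.\<close>
definition fhmh_origin_GAS :: "real \<Rightarrow> real \<Rightarrow> real \<Rightarrow> real \<Rightarrow> real \<Rightarrow> bool" where
  "fhmh_origin_GAS \<beta> \<delta> K \<eta>1 \<eta>2 \<longleftrightarrow>
     (\<forall>\<epsilon>>0. \<exists>d>0. \<forall>f m. fhmh_solution \<beta> \<delta> K \<eta>1 \<eta>2 f m \<and> f 0 \<ge> 0 \<and> m 0 \<ge> 0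
          \<and> norm (f 0, m 0) < d \<longrightarrow> (\<forall>t\<ge>0. norm (f t, m t) < \<epsilon>))
   \<and> (\<forall>f m. fhmh_solution \<beta> \<delta> K \<eta>1 \<eta>2 f m \<and> f 0 \<ge> 0 \<and> m 0 \<ge> 0
          \<longrightarrow> ((\<lambda>t. (f t, m t)) \<longlongrightarrow> (0, 0)) at_top)"

end

theory Submission
  imports Defs "HOL-Real_Asymp.Real_Asymp"
begin

lemma no_escape:
  fixes S S' :: "real \<Rightarrow> real" and T c b :: real
  assumes cont: "continuous_on {0..T} S"
    and der: "\<And>t. 0 < t \<Longrightarrow> t < T \<Longrightarrow> (S has_real_derivative S' t) (at t)"
    and sgn: "\<And>t. 0 < t \<Longrightarrow> t < T \<Longrightarrow> c < S t \<Longrightarrow> S t < b \<Longrightarrow> S' t \<le> 0"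
    and S0: "S 0 \<le> c" and cb: "c < b"
  shows "\<forall>t\<in>{0..T}. S t \<le> c"
proof (rule ccontr)
  assume "\<not> ?thesis"
  then obtain t1 where t1: "0 \<le> t1" "t1 \<le> T" "S t1 > c" by auto
  define l where "l = min (S t1) ((c+b)/2)"
  have l: "c < l" "l < b" "l \<le> S t1" using t1 cb unfolding l_def min_def by auto
  have cont1: "continuous_on {0..t1} S" using cont t1 by (auto intro: continuous_on_subset)
  define B where "B = {s\<in>{0..t1}. l \<le> S s}"
  have "closed B" unfolding B_def
    by (intro continuous_on_closed_Collect_le cont1 continuous_on_const) auto
  moreover have "t1 \<in> B" using l t1 by (auto simp: B_def)
  moreover have "bdd_below B" unfolding B_def by (auto intro!: bdd_belowI[of _ 0])
  ultimately have t2B: "Inf B \<in> B" using closed_contains_Inf by blast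
  define t2 where "t2 = Inf B"
  have t2: "0 \<le> t2" "t2 \<le> t1" "l \<le> S t2" using t2B by (auto simp: B_def t2_def)
  have belowl: "S s < l" if "0 \<le> s" "s < t2" for s
  proof (rule ccontr)
    assume "\<not> S s < l"
    hence "s \<in> B" using that t2 by (auto simp: B_def)
    hence "Inf B \<le> s" using \<open>bdd_below B\<close> by (rule cInf_lower)
    thus False using that by (simp add: t2_def)
  qed
  define A where "A = {s\<in>{0..t2}. S s \<le> c}"
  have cont2: "continuous_on {0..t2} S" using cont t1 t2 by (auto intro: continuous_on_subset)
  have "closed A" unfolding A_def
    by (intro continuous_on_closed_Collect_le cont2 continuous_on_const) auto
  moreover have "0 \<in> A" using S0 t2 by (auto simp: A_def)
  moreover have "bdd_above A" unfolding A_def by (auto intro!: bdd_aboveI[of _ t2])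
  ultimately have t0A: "Sup A \<in> A" using closed_contains_Sup by blast
  define t0 where "t0 = Sup A"
  have t0: "0 \<le> t0" "t0 \<le> t2" "S t0 \<le> c" using t0A by (auto simp: A_def t0_def)
  have "t0 \<noteq> t2" using t0 t2 l by auto
  hence t02: "t0 < t2" using t0 by simp
  have notA: "c < S s" if "t0 < s" "s \<le> t2" for s
  proof -
    have "s \<notin> A"
    proof
      assume "s \<in> A"
      hence "s \<le> Sup A" using \<open>bdd_above A\<close> by (rule cSup_upper)
      thus False using that by (simp add: t0_def)
    qed
    thus ?thesis using that t0 by (auto simp: A_def)
  qed
  have dec: "S t2 \<le> S t0"
  proof (rule DERIV_nonpos_imp_decreasing_open[of t0 t2 S])
    show "t0 \<le> t2" using t02 by simp
    show "continuous_on {t0..t2} S" using cont2 t0 by (auto intro: continuous_on_subset)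
    fix x assume x: "t0 < x" "x < t2"
    have "S x < b" using belowl[of x] x t0 l by auto
    then show "\<exists>y. DERIV S x :> y \<and> y \<le> 0"
      using der[of x] sgn[of x] notA[of x] x t0 t1 t2 by auto
  qed
  thus False using t2 t0 l by linarith
qed

lemma exp_decay:
  fixes u u' :: "real \<Rightarrow> real" and a k :: real
  assumes cont: "continuous_on {a..} u"
    and der: "\<And>t. a < t \<Longrightarrow> (u has_real_derivative u' t) (at t)"
    and bd: "\<And>t. a < t \<Longrightarrow> u' t \<le> - k * u t"
    and "a \<le> t"
  shows "u t \<le> u a * exp (- k * (t - a))"
proof -
  define h where "h s = u s * exp (k * (s - a))" for s
  have "h t \<le> h a"
  proof (rule DERIV_nonpos_imp_decreasing_open[of a t h])
    show "a \<le> t" by fact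
    show "continuous_on {a..t} h" unfolding h_def
      using cont by (auto intro!: continuous_intros intro: continuous_on_subset)
    fix x assume x: "a < x" "x < t"
    have "(h has_real_derivative (u' x * exp (k * (x - a)) + u x * (exp (k * (x - a)) * k))) (at x)"
      unfolding h_def using der[of x] x
      by (auto intro!: derivative_eq_intros)
    moreover have "u' x * exp (k * (x - a)) + u x * (exp (k * (x - a)) * k) = (u' x + k * u x) * exp (k * (x - a))"
      by (simp add: algebra_simps)
    moreover have "(u' x + k * u x) * exp (k * (x - a)) \<le> 0"
      using bd[of x] x by (intro mult_nonpos_nonneg) auto
    ultimately show "\<exists>y. DERIV h x :> y \<and> y \<le> 0" by auto
  qed
  hence "u t * exp (k * (t - a)) \<le> u a" by (simp add: h_def)
  hence "u t * exp (k * (t - a)) * exp (- k * (t - a)) \<le> u a * exp (- k * (t - a))"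
    by (intro mult_right_mono) auto
  thus ?thesis by (simp add: mult.assoc flip: exp_add)
qed

lemma exp_decay_tendsto:
  fixes k C a :: real
  assumes "k > 0"
  shows "((\<lambda>t. C * exp (- k * (t - a))) \<longlongrightarrow> 0) at_top"
  using assms by real_asymp


lemma nonneg_sol:
  fixes x g :: "real \<Rightarrow> real" and t :: real
  assumes cx: "continuous_on {0..} x" and cg: "continuous_on {0..} g"
    and der: "\<And>s. 0 < s \<Longrightarrow> (x has_real_derivative x s * g s) (at s)"
    and x0: "x 0 \<ge> 0" and t: "0 \<le> t"
  shows "x t \<ge> 0"
proof -
  have "continuous_on {0..t} g" using cg by (auto intro: continuous_on_subset)
  then obtain s0 where "s0 \<in> {0..t}" "\<forall>s\<in>{0..t}. g s \<le> g s0"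
    using continuous_attains_sup[of "{0..t}" g] t by auto
  then obtain M where M: "\<And>s. s \<in> {0..t} \<Longrightarrow> g s \<le> M" by blast
  define h where "h s = - x s * exp (- M * s)" for s
  define h' where "h' s = - (x s * g s) * exp (- M * s) + (- x s) * (exp (- M * s) * (- M))" for s
  have "\<forall>s\<in>{0..t}. h s \<le> 0"
  proof (rule no_escape[of t h h' 0 1])
    show "continuous_on {0..t} h" unfolding h_def
      using cx by (auto intro!: continuous_intros intro: continuous_on_subset)
    fix s assume s: "0 < s" "s < t"
    show "(h has_real_derivative h' s) (at s)" unfolding h_def h'_def
      using der[of s] s by (auto intro!: derivative_eq_intros)
    assume "0 < h s" "h s < 1"
    hence "x s < 0" by (auto simp: h_def mult_less_0_iff)
    moreover have "g s - M \<le> 0" using M[of s] s by auto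
    ultimately have "(- x s) * (g s - M) * exp (- M * s) \<le> 0"
      by (intro mult_nonpos_nonneg mult_nonneg_nonpos) auto
    moreover have "h' s = (- x s) * (g s - M) * exp (- M * s)"
      by (simp add: h'_def algebra_simps)
    ultimately show "h' s \<le> 0" by simp
  qed (use x0 in \<open>auto simp: h_def\<close>)
  hence "h t \<le> 0" using t by auto
  thus ?thesis by (auto simp: h_def zero_le_mult_iff)
qed

lemma xL_le:
  fixes x y K :: real
  assumes "0 \<le> x" "0 \<le> y" "0 < K"
  shows "x * fhmh_L K x y \<le> K / 4"
proof -
  have "x * fhmh_L K x y \<le> x * (1 - x / K)"
    unfolding fhmh_L_def using assms by (intro mult_left_mono) (auto simp: field_simps)
  also have "x * (1 - x / K) = (K*K/4 - (x - K/2)^2) / K"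
    using assms by (simp add: field_simps power2_eq_square)
  also have "\<dots> \<le> (K*K/4) / K" using assms by (intro divide_right_mono) auto
  also have "\<dots> = K / 4" using assms by simp
  finally show ?thesis .
qed

lemma yL_le:
  fixes x y K :: real
  assumes "0 \<le> x" "0 \<le> y" "0 < K"
  shows "y * fhmh_L K x y \<le> y"
proof -
  have "fhmh_L K x y \<le> 1" unfolding fhmh_L_def using assms by auto
  thus ?thesis using assms mult_left_mono[of "fhmh_L K x y" 1 y] by simp
qed

lemma attract_one:
  fixes x y :: "real \<Rightarrow> real" and \<beta> \<delta> K a b :: real
  assumes cx: "continuous_on {0..} x" and cy: "continuous_on {0..} y"
    and dx: "\<And>t. 0 < t \<Longrightarrow> (x has_real_derivative
        (1/2 * x t * y t * \<beta> * fhmh_L K (x t) (y t) - \<delta> * x t - a * x t)) (at t)"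
    and dy: "\<And>t. 0 < t \<Longrightarrow> (y has_real_derivative
        (1/2 * x t * y t * \<beta> * fhmh_L K (x t) (y t) - \<delta> * y t - b * y t)) (at t)"
    and nx: "\<And>t. 0 \<le> t \<Longrightarrow> 0 \<le> x t" and ny: "\<And>t. 0 \<le> t \<Longrightarrow> 0 \<le> y t"
    and pos: "0 < \<beta>" "0 < \<delta>" "0 < K" "0 \<le> a" "0 \<le> b"
    and cond: "\<beta> * K / 8 < \<delta> + b"
  shows "(x \<longlongrightarrow> 0) at_top \<and> (y \<longlongrightarrow> 0) at_top"
proof -
  define k where "k = \<delta> + b - \<beta> * K / 8"
  have k: "k > 0" using cond by (simp add: k_def)
  have ybd: "y t \<le> y 0 * exp (- k * (t - 0))" if "0 \<le> t" for t
  proof (rule exp_decay[OF cy dy _ that])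
    fix t :: real assume t: "0 < t"
    have "x t * fhmh_L K (x t) (y t) \<le> K / 4" using xL_le nx ny t pos by auto
    hence "(\<beta>/2 * y t) * (x t * fhmh_L K (x t) (y t)) \<le> (\<beta>/2 * y t) * (K/4)"
      using pos ny[of t] t by (intro mult_left_mono) auto
    thus "1/2 * x t * y t * \<beta> * fhmh_L K (x t) (y t) - \<delta> * y t - b * y t \<le> - k * y t"
      by (simp add: k_def algebra_simps)
  qed
  have ylim: "(y \<longlongrightarrow> 0) at_top"
  proof (rule tendsto_sandwich[of "\<lambda>_. 0" _ _ "\<lambda>t. y 0 * exp (- k * (t - 0))"])
    show "\<forall>\<^sub>F t in at_top. 0 \<le> y t" using ny by (auto simp: eventually_at_top_linorder)
    show "\<forall>\<^sub>F t in at_top. y t \<le> y 0 * exp (- k * (t - 0))"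
      using ybd by (auto simp: eventually_at_top_linorder)
  qed (simp, rule exp_decay_tendsto[OF k])
  have "\<forall>\<^sub>F t in at_top. y t < \<delta> / \<beta>"
    using order_tendstoD(2)[OF ylim, of "\<delta>/\<beta>"] pos by auto
  then obtain t0 where t0: "\<And>t. t \<ge> t0 \<Longrightarrow> y t < \<delta> / \<beta>"
    by (auto simp: eventually_at_top_linorder)
  define a0 where "a0 = max t0 0"
  have xbd: "x t \<le> x a0 * exp (- (\<delta>/2) * (t - a0))" if "a0 \<le> t" for t
  proof (rule exp_decay[of a0 x])
    show "continuous_on {a0..} x" using cx by (auto intro: continuous_on_subset simp: a0_def)
    fix t :: real assume t: "a0 < t"
    show "(x has_real_derivative
        (1/2 * x t * y t * \<beta> * fhmh_L K (x t) (y t) - \<delta> * x t - a * x t)) (at t)"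
      using dx t by (auto simp: a0_def)
    have t0': "t \<ge> t0" "t > 0" using t by (auto simp: a0_def)
    have "y t * fhmh_L K (x t) (y t) \<le> y t" using yL_le nx ny t0' pos by auto
    also have "\<dots> \<le> \<delta> / \<beta>" using t0 t0' by (auto intro: less_imp_le)
    finally have "y t * fhmh_L K (x t) (y t) \<le> \<delta> / \<beta>" .
    hence "(\<beta>/2 * x t) * (y t * fhmh_L K (x t) (y t)) \<le> (\<beta>/2 * x t) * (\<delta> / \<beta>)"
      using pos nx[of t] t0' by (intro mult_left_mono) auto
    moreover have "(\<beta>/2 * x t) * (\<delta> / \<beta>) = \<delta>/2 * x t" using pos by simp
    moreover have "0 \<le> a * x t" using pos nx[of t] t0' by auto
    ultimately show "1/2 * x t * y t * \<beta> * fhmh_L K (x t) (y t) - \<delta> * x t - a * x t \<le> - (\<delta>/2) * x t"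
      by (simp add: algebra_simps)
  qed (use that in auto)
  have xlim: "(x \<longlongrightarrow> 0) at_top"
  proof (rule tendsto_sandwich[of "\<lambda>_. 0" _ _ "\<lambda>t. x a0 * exp (- (\<delta>/2) * (t - a0))"])
    show "\<forall>\<^sub>F t in at_top. 0 \<le> x t" using nx by (auto simp: eventually_at_top_linorder)
    show "\<forall>\<^sub>F t in at_top. x t \<le> x a0 * exp (- (\<delta>/2) * (t - a0))"
      using xbd by (auto simp: eventually_at_top_linorder)
  qed (simp, rule exp_decay_tendsto, use pos in simp)
  show ?thesis using xlim ylim by simp
qed


theorem mainTheorem7:
  fixes \<beta> \<delta> K \<eta>1 \<eta>2 :: real
  assumes "0 < \<beta>" "\<beta> < 1" "0 < \<delta>" "\<delta> < 1" "0 < K" "0 \<le> \<eta>1" "0 \<le> \<eta>2"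
    and "\<beta> * K < 2 * \<delta> + \<eta>1 + \<eta>2"
  shows "fhmh_origin_GAS \<beta> \<delta> K \<eta>1 \<eta>2"
proof -
  note pos = assms
  have basic: "continuous_on {0..} f \<and> continuous_on {0..} m
      \<and> (\<forall>t>0. (f has_real_derivative fhmh_rhs_f \<beta> \<delta> K \<eta>1 \<eta>2 (f t) (m t)) (at t))
      \<and> (\<forall>t>0. (m has_real_derivative fhmh_rhs_m \<beta> \<delta> K \<eta>1 \<eta>2 (f t) (m t)) (at t))
      \<and> (\<forall>t\<ge>0. 0 \<le> f t \<and> 0 \<le> m t)"
    if sol: "fhmh_solution \<beta> \<delta> K \<eta>1 \<eta>2 f m" and f0: "f 0 \<ge> 0" and m0: "m 0 \<ge> 0" for f m
  proof -
    have D: "\<And>t. t \<ge> 0 \<Longrightarrow> (f has_real_derivative fhmh_rhs_f \<beta> \<delta> K \<eta>1 \<eta>2 (f t) (m t)) (at t within {0..})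
          \<and> (m has_real_derivative fhmh_rhs_m \<beta> \<delta> K \<eta>1 \<eta>2 (f t) (m t)) (at t within {0..})"
      using sol unfolding fhmh_solution_def by auto
    have cf: "continuous_on {0..} f" unfolding continuous_on_eq_continuous_within
      using D DERIV_continuous by blast
    have cm: "continuous_on {0..} m" unfolding continuous_on_eq_continuous_within
      using D DERIV_continuous by blast
    have Df: "\<forall>t>0. (f has_real_derivative fhmh_rhs_f \<beta> \<delta> K \<eta>1 \<eta>2 (f t) (m t)) (at t)"
    proof (intro allI impI)
      fix t :: real assume t: "t > 0"
      have "at t within {0..} = at t" by (rule at_within_interior) (use t in simp)
      thus "(f has_real_derivative fhmh_rhs_f \<beta> \<delta> K \<eta>1 \<eta>2 (f t) (m t)) (at t)"
        using D[of t] t by simp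
    qed
    have Dm: "\<forall>t>0. (m has_real_derivative fhmh_rhs_m \<beta> \<delta> K \<eta>1 \<eta>2 (f t) (m t)) (at t)"
    proof (intro allI impI)
      fix t :: real assume t: "t > 0"
      have "at t within {0..} = at t" by (rule at_within_interior) (use t in simp)
      thus "(m has_real_derivative fhmh_rhs_m \<beta> \<delta> K \<eta>1 \<eta>2 (f t) (m t)) (at t)"
        using D[of t] t by simp
    qed
    have nf: "0 \<le> f t" if "0 \<le> t" for t
    proof (rule nonneg_sol[OF cf _ _ f0 that])
      show "continuous_on {0..} (\<lambda>s. 1/2 * m s * \<beta> * fhmh_L K (f s) (m s) - \<delta> - \<eta>1)"
        unfolding fhmh_L_def using cf cm pos by (intro continuous_intros) auto
      fix s :: real assume "0 < s"
      moreover have "fhmh_rhs_f \<beta> \<delta> K \<eta>1 \<eta>2 (f s) (m s) = f s * (1/2 * m s * \<beta> * fhmh_L K (f s) (m s) - \<delta> - \<eta>1)"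
        by (simp add: fhmh_rhs_f_def algebra_simps)
      ultimately show "(f has_real_derivative f s * (1/2 * m s * \<beta> * fhmh_L K (f s) (m s) - \<delta> - \<eta>1)) (at s)"
        using Df by metis
    qed
    have nm: "0 \<le> m t" if "0 \<le> t" for t
    proof (rule nonneg_sol[OF cm _ _ m0 that])
      show "continuous_on {0..} (\<lambda>s. 1/2 * f s * \<beta> * fhmh_L K (f s) (m s) - \<delta> - \<eta>2)"
        unfolding fhmh_L_def using cf cm pos by (intro continuous_intros) auto
      fix s :: real assume "0 < s"
      moreover have "fhmh_rhs_m \<beta> \<delta> K \<eta>1 \<eta>2 (f s) (m s) = m s * (1/2 * f s * \<beta> * fhmh_L K (f s) (m s) - \<delta> - \<eta>2)"
        by (simp add: fhmh_rhs_m_def algebra_simps)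
      ultimately show "(m has_real_derivative m s * (1/2 * f s * \<beta> * fhmh_L K (f s) (m s) - \<delta> - \<eta>2)) (at s)"
        using Dm by metis
    qed
    show ?thesis using cf cm Df Dm nf nm by auto
  qed
  have normle: "norm (a, b) \<le> a + b" if "0 \<le> a" "0 \<le> b" for a b :: real
  proof -
    have "norm (a, b) = sqrt (a^2 + b^2)" by (simp add: norm_Pair)
    also have "\<dots> \<le> sqrt ((a + b)^2)" using that by (intro real_sqrt_le_mono) (simp add: power2_eq_square algebra_simps)
    also have "\<dots> = a + b" using that by simp
    finally show ?thesis .
  qed
  have normge: "a + b \<le> 2 * norm (a, b)" for a b :: real
  proof -
    have "a \<le> norm (a, b)" "b \<le> norm (a, b)"
      using real_sqrt_sum_squares_ge1[of a b] real_sqrt_sum_squares_ge1[of b a]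
      by (simp_all add: norm_Pair add.commute)
    thus ?thesis by simp
  qed
  have stab: "\<forall>\<epsilon>>0. \<exists>d>0. \<forall>f m. fhmh_solution \<beta> \<delta> K \<eta>1 \<eta>2 f m \<and> f 0 \<ge> 0 \<and> m 0 \<ge> 0
          \<and> norm (f 0, m 0) < d \<longrightarrow> (\<forall>t\<ge>0. norm (f t, m t) < \<epsilon>)"
  proof (intro allI impI)
    fix \<epsilon> :: real assume e: "\<epsilon> > 0"
    define b0 where "b0 = 4 * \<delta> / \<beta>"
    have b0: "b0 > 0" using pos by (simp add: b0_def)
    define d where "d = min \<epsilon> b0 / 2"
    have "d > 0" using e b0 by (simp add: d_def)
    moreover have "\<forall>t\<ge>0. norm (f t, m t) < \<epsilon>"
      if sol: "fhmh_solution \<beta> \<delta> K \<eta>1 \<eta>2 f m" and f0: "f 0 \<ge> 0" and m0: "m 0 \<ge> 0"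
        and nd: "norm (f 0, m 0) < d" for f m
    proof (intro allI impI)
      fix t :: real assume t: "t \<ge> 0"
      note B = basic[OF sol f0 m0]
      define c where "c = f 0 + m 0"
      have c: "c < min \<epsilon> b0" using normge[of "f 0" "m 0"] nd by (simp add: c_def d_def)
      have "\<forall>s\<in>{0..t}. f s + m s \<le> c"
      proof (rule no_escape[of t "\<lambda>s. f s + m s"
          "\<lambda>s. fhmh_rhs_f \<beta> \<delta> K \<eta>1 \<eta>2 (f s) (m s) + fhmh_rhs_m \<beta> \<delta> K \<eta>1 \<eta>2 (f s) (m s)" c b0])
        show "continuous_on {0..t} (\<lambda>s. f s + m s)"
          using B by (auto intro!: continuous_intros intro: continuous_on_subset)
        show "c < b0" using c by simp
        show "f 0 + m 0 \<le> c" by (simp add: c_def)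
        fix s :: real assume s: "0 < s" "s < t"
        show "((\<lambda>s. f s + m s) has_real_derivative
            fhmh_rhs_f \<beta> \<delta> K \<eta>1 \<eta>2 (f s) (m s) + fhmh_rhs_m \<beta> \<delta> K \<eta>1 \<eta>2 (f s) (m s)) (at s)"
          using B s by (auto intro!: derivative_eq_intros)
        assume cs: "c < f s + m s" "f s + m s < b0"
        have fs: "0 \<le> f s" and ms: "0 \<le> m s" using B s by auto
        have L1: "fhmh_L K (f s) (m s) \<le> 1" unfolding fhmh_L_def using fs ms pos by auto
        have "(f s * m s * \<beta>) * fhmh_L K (f s) (m s) \<le> (f s * m s * \<beta>) * 1"
          using L1 fs ms pos by (intro mult_left_mono) auto
        moreover have "f s * m s \<le> (f s + m s)^2 / 4"
          using sum_squares_ge_zero[of "f s - m s" 0] by (simp add: power2_eq_square algebra_simps)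
        hence "\<beta> * (f s * m s) \<le> \<beta> * ((f s + m s)^2 / 4)" using pos by (intro mult_left_mono) auto
        moreover have "\<beta> * (f s + m s) \<le> 4 * \<delta>" using cs pos by (simp add: b0_def field_simps)
        hence "(f s + m s) * (\<beta> * (f s + m s)) \<le> (f s + m s) * (4 * \<delta>)"
          using fs ms by (intro mult_left_mono) auto
        moreover have "0 \<le> \<eta>1 * f s" "0 \<le> \<eta>2 * m s" using fs ms pos by auto
        ultimately show "fhmh_rhs_f \<beta> \<delta> K \<eta>1 \<eta>2 (f s) (m s) + fhmh_rhs_m \<beta> \<delta> K \<eta>1 \<eta>2 (f s) (m s) \<le> 0"
          unfolding fhmh_rhs_f_def fhmh_rhs_m_def
          by (simp add: power2_eq_square algebra_simps)
      qed
      hence "f t + m t \<le> c" using t by auto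
      moreover have "norm (f t, m t) \<le> f t + m t" using B t normle by auto
      ultimately show "norm (f t, m t) < \<epsilon>" using c by linarith
    qed
    ultimately show "\<exists>d>0. \<forall>f m. fhmh_solution \<beta> \<delta> K \<eta>1 \<eta>2 f m \<and> f 0 \<ge> 0 \<and> m 0 \<ge> 0
          \<and> norm (f 0, m 0) < d \<longrightarrow> (\<forall>t\<ge>0. norm (f t, m t) < \<epsilon>)" by blast
  qed
  have attr: "((\<lambda>t. (f t, m t)) \<longlongrightarrow> (0, 0)) at_top"
    if sol: "fhmh_solution \<beta> \<delta> K \<eta>1 \<eta>2 f m" and f0: "f 0 \<ge> 0" and m0: "m 0 \<ge> 0" for f m
  proof -
    note B = basic[OF sol f0 m0]
    have lims: "(f \<longlongrightarrow> 0) at_top \<and> (m \<longlongrightarrow> 0) at_top"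
    proof (cases "\<beta> * K / 8 < \<delta> + \<eta>2")
      case True
      show ?thesis
      proof (rule attract_one[of f m \<beta> K \<delta> \<eta>1 \<eta>2])
        fix t :: real assume "0 < t"
        thus "(f has_real_derivative 1/2 * f t * m t * \<beta> * fhmh_L K (f t) (m t) - \<delta> * f t - \<eta>1 * f t) (at t)"
          "(m has_real_derivative 1/2 * f t * m t * \<beta> * fhmh_L K (f t) (m t) - \<delta> * m t - \<eta>2 * m t) (at t)"
          using B by (auto simp: fhmh_rhs_f_def fhmh_rhs_m_def)
      qed (use B pos True in auto)
    next
      case False
      hence F: "\<beta> * K / 8 < \<delta> + \<eta>1" using pos by linarith
      have "(m \<longlongrightarrow> 0) at_top \<and> (f \<longlongrightarrow> 0) at_top"
      proof (rule attract_one[of m f \<beta> K \<delta> \<eta>2 \<eta>1])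
        fix t :: real assume "0 < t"
        moreover have "fhmh_rhs_m \<beta> \<delta> K \<eta>1 \<eta>2 (f t) (m t) = 1/2 * m t * f t * \<beta> * fhmh_L K (m t) (f t) - \<delta> * m t - \<eta>2 * m t"
          "fhmh_rhs_f \<beta> \<delta> K \<eta>1 \<eta>2 (f t) (m t) = 1/2 * m t * f t * \<beta> * fhmh_L K (m t) (f t) - \<delta> * f t - \<eta>1 * f t"
          by (simp_all add: fhmh_rhs_f_def fhmh_rhs_m_def fhmh_L_def algebra_simps)
        ultimately show "(m has_real_derivative 1/2 * m t * f t * \<beta> * fhmh_L K (m t) (f t) - \<delta> * m t - \<eta>2 * m t) (at t)"
          "(f has_real_derivative 1/2 * m t * f t * \<beta> * fhmh_L K (m t) (f t) - \<delta> * f t - \<eta>1 * f t) (at t)"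
          using B by metis+
      qed (use B pos F in auto)
      thus ?thesis by simp
    qed
    thus ?thesis by (intro tendsto_Pair) auto
  qed
  show ?thesis unfolding fhmh_origin_GAS_def using stab attr by blast
qed

end
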